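(* Let $f\in L^2(\mathbb R)$, $p,q\in\mathbb Z$, $g:=D^pT^qf$ and $h:=T^qD^pf$. Then for all $l\in\mathbb I$, $k\in\mathbb Z$: $$\hat g^{(k)}_l=\sum_{s,j,m}\overline{\alpha^{s,j,m}_{l,k}}\sum_{i,n}\alpha^{s,j,m-p}_{i,n+q}\hat f^{(n)}_i,\qquad \hat h^{(k)}_l=\sum_{s,j,m}\overline{\alpha^{s,j,m}_{l,k-q}}\sum_{i,n}\alpha^{s,j,m-p}_{i,n}\hat f^{(n)}_i,$$ and for all $\sigma\in\{+,-\}$, $l\in\mathbb J$, $k\in\mathbb Z$: $$\tilde g^{(k)}_{\sigma,l}=\sum_{i,n}\alpha^{\sigma,l,k-p}_{i,n}\sum_{s,j,m}\overline{\alpha^{s,j,m}_{i,n-q}}\tilde f^{(m)}_{s,j},\qquad \tilde h^{(k)}_{\sigma,l}=\sum_{i,n}\alpha^{\sigma,l,k}_{i,n}\sum_{s,j,m}\overline{\alpha^{s,j,m+p}_{i,n-q}}\tilde f^{(m)}_{s,j}.$$ Here $s$ ranges over $\{+,-\}$, $j$ over $\mathbb J$, $i$ over $\mathbb I$, and $m,n$ over $\mathbb Z$.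
   Context: On $L^2(\mathbb R)$ let $(Df)(x)=2^{1/2}f(2x)$ and $(Tf)(x)=f(x-1)$. Let $\mathbb I$ be a countable index set and $\{L^{(0)}_i\}_{i\in\mathbb I}$ an orthonormal basis of $L^2[0,1)$ (extended by zero), $L^{(n)}_i(x)=L^{(0)}_i(x-n)$ for $n\in\mathbb Z$, and for $f\in L^2(\mathbb R)$, $\hat f^{(n)}_i=\int_{\mathbb R}f\overline{L^{(n)}_i}$. Let $\mathbb J$ be a countable index set, $\{K^{(0)}_{+,j}\}_{j\in\mathbb J}$ an orthonormal basis of $L^2[1,2)$, $\{K^{(0)}_{-,j}\}_{j\in\mathbb J}$ an orthonormal basis of $L^2(-2,-1]$ (extended by zero), $K^{(m)}_{s,j}(x)=2^{m/2}K^{(0)}_{s,j}(2^mx)$ for $m\in\mathbb Z$, and $\tilde f^{(m)}_{s,j}=\int_{\mathbb R}f\overline{K^{(m)}_{s,j}}$. Both $\{L^{(n)}_i\}_{i,n}$ and $\{K^{(m)}_{s,j}\}_{s,j,m}$ are orthonormal bases of $L^2(\mathbb R)$. The change-of-basis matrix is $\alpha^{s,j,m}_{i,n}:=\int_{\mathbb R}L^{(n)}_i(x)\overline{K^{(m)}_{s,j}(x)}\,dx$. The coordinates $\hat g^{(n)}_i,\hat h^{(n)}_i,\tilde g^{(m)}_{s,j},\tilde h^{(m)}_{s,j}$ of $g,h$ are defined in the same way as those of $f$. *)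

theory Defs
  imports "HOL-Analysis.Analysis"
begin

definition sq_int :: "(real \<Rightarrow> complex) \<Rightarrow> bool" where
  "sq_int f \<longleftrightarrow> f \<in> borel_measurable lborel \<and> integrable lborel (\<lambda>x. (cmod (f x))^2)"

definition ip :: "(real \<Rightarrow> complex) \<Rightarrow> (real \<Rightarrow> complex) \<Rightarrow> complex" where
  "ip f g = (LINT x|lborel. f x * cnj (g x))"

definition onb_on :: "real set \<Rightarrow> ('i \<Rightarrow> real \<Rightarrow> complex) \<Rightarrow> bool" where
  "onb_on S B \<longleftrightarrow>
     (\<forall>i. sq_int (B i) \<and> (\<forall>x. x \<notin> S \<longrightarrow> B i x = 0)) \<and>
     (\<forall>i i'. ip (B i) (B i') = (if i = i' then 1 else 0)) \<and>
     (\<forall>f. sq_int f \<and> (\<forall>x. x \<notin> S \<longrightarrow> f x = 0) \<and> (\<forall>i. ip f (B i) = 0)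
          \<longrightarrow> (AE x in lborel. f x = 0))"

definition dil :: "(real \<Rightarrow> complex) \<Rightarrow> real \<Rightarrow> complex" where
  "dil f x = complex_of_real (sqrt 2) * f (2 * x)"

definition dil_inv :: "(real \<Rightarrow> complex) \<Rightarrow> real \<Rightarrow> complex" where
  "dil_inv f x = f (x / 2) / complex_of_real (sqrt 2)"

definition transl :: "(real \<Rightarrow> complex) \<Rightarrow> real \<Rightarrow> complex" where
  "transl f x = f (x - 1)"

definition transl_inv :: "(real \<Rightarrow> complex) \<Rightarrow> real \<Rightarrow> complex" where
  "transl_inv f x = f (x + 1)"

definition int_pow :: "('a \<Rightarrow> 'a) \<Rightarrow> ('a \<Rightarrow> 'a) \<Rightarrow> int \<Rightarrow> 'a \<Rightarrow> 'a" where
  "int_pow F Finv p = (if 0 \<le> p then F ^^ nat p else Finv ^^ nat (- p))"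

definition Dp :: "int \<Rightarrow> (real \<Rightarrow> complex) \<Rightarrow> real \<Rightarrow> complex" where
  "Dp p = int_pow dil dil_inv p"

definition Tq :: "int \<Rightarrow> (real \<Rightarrow> complex) \<Rightarrow> real \<Rightarrow> complex" where
  "Tq q = int_pow transl transl_inv q"

text \<open>The two bases: L^(n)_i and K^(m)_(s,j); the sign s is a bool (True = +, False = -).\<close>
definition Lb :: "('i \<Rightarrow> real \<Rightarrow> complex) \<Rightarrow> int \<Rightarrow> 'i \<Rightarrow> real \<Rightarrow> complex" where
  "Lb L0 n i x = L0 i (x - real_of_int n)"

definition Kb :: "(bool \<Rightarrow> 'j \<Rightarrow> real \<Rightarrow> complex) \<Rightarrow> int \<Rightarrow> bool \<Rightarrow> 'j \<Rightarrow> real \<Rightarrow> complex" where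
  "Kb K0 m s j x = complex_of_real (2 powr (real_of_int m / 2)) * K0 s j (2 powr (real_of_int m) * x)"

definition alpha :: "('i \<Rightarrow> real \<Rightarrow> complex) \<Rightarrow> (bool \<Rightarrow> 'j \<Rightarrow> real \<Rightarrow> complex)
                     \<Rightarrow> bool \<Rightarrow> 'j \<Rightarrow> int \<Rightarrow> 'i \<Rightarrow> int \<Rightarrow> complex" where
  "alpha L0 K0 s j m i n = ip (Lb L0 n i) (Kb K0 m s j)"

definition fhat :: "('i \<Rightarrow> real \<Rightarrow> complex) \<Rightarrow> (real \<Rightarrow> complex) \<Rightarrow> int \<Rightarrow> 'i \<Rightarrow> complex" where
  "fhat L0 f n i = ip f (Lb L0 n i)"

definition ftil :: "(bool \<Rightarrow> 'j \<Rightarrow> real \<Rightarrow> complex) \<Rightarrow> (real \<Rightarrow> complex) \<Rightarrow> int \<Rightarrow> bool \<Rightarrow> 'j \<Rightarrow> complex" where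
  "ftil K0 f m s j = ip f (Kb K0 m s j)"

end

theory Submission
  imports Defs "HOL-Probability.Probability"
begin

definition n2 :: "(real \<Rightarrow> complex) \<Rightarrow> real" where
  "n2 f = (LINT x|lborel. (cmod (f x))^2)"

lemma borel_measurable_cnj':
  "f \<in> borel_measurable M \<Longrightarrow> (\<lambda>x. cnj (f x)) \<in> borel_measurable M"
  by (intro borel_measurable_continuous_on[where f=cnj] continuous_intros) auto

lemma sq_intD: "sq_int f \<Longrightarrow> f \<in> borel_measurable lborel"
  "sq_int f \<Longrightarrow> integrable lborel (\<lambda>x. (cmod (f x))^2)"
  by (auto simp: sq_int_def)

lemma sq_int_add: assumes "sq_int f" "sq_int g" shows "sq_int (\<lambda>x. f x + g x)"
  unfolding sq_int_def
proof
  show m: "(\<lambda>x. f x + g x) \<in> borel_measurable lborel" using assms by (auto simp: sq_int_def)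
  show "integrable lborel (\<lambda>x. (cmod (f x + g x))\<^sup>2)"
  proof (rule Bochner_Integration.integrable_bound[where f="\<lambda>x. 2*(cmod (f x))^2 + 2*(cmod (g x))^2"])
    show "integrable lborel (\<lambda>x. 2*(cmod (f x))^2 + 2*(cmod (g x))^2)"
      using assms by (auto simp: sq_int_def)
    show "(\<lambda>x. (cmod (f x + g x))\<^sup>2) \<in> borel_measurable lborel" using m by measurable
    show "AE x in lborel. norm ((cmod (f x + g x))\<^sup>2) \<le> norm (2*(cmod (f x))^2 + 2*(cmod (g x))^2)"
    proof (rule AE_I2)
      fix x
      have "cmod (f x + g x) \<le> cmod (f x) + cmod (g x)" by (rule norm_triangle_ineq)
      hence "(cmod (f x + g x))^2 \<le> (cmod (f x) + cmod (g x))^2"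
        by (simp add: power_mono)
      also have "\<dots> \<le> 2*(cmod (f x))^2 + 2*(cmod (g x))^2"
        by (smt (verit) sum_squares_bound power2_sum zero_le_power2 power2_diff)
      finally show "norm ((cmod (f x + g x))\<^sup>2) \<le> norm (2*(cmod (f x))^2 + 2*(cmod (g x))^2)" by simp
    qed
  qed
qed

lemma sq_int_cmult: assumes "sq_int f" shows "sq_int (\<lambda>x. c * f x)"
  using assms unfolding sq_int_def
  by (auto simp: norm_mult power_mult_distrib)

lemma sq_int_uminus: assumes "sq_int f" shows "sq_int (\<lambda>x. - f x)"
  using sq_int_cmult[OF assms, of "-1"] by simp

lemma sq_int_diff: assumes "sq_int f" "sq_int g" shows "sq_int (\<lambda>x. f x - g x)"
  using sq_int_add[OF assms(1) sq_int_uminus[OF assms(2)]] by simp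

lemma sq_int_zero: "sq_int (\<lambda>x. 0)" by (simp add: sq_int_def)

lemma sq_int_sum: assumes "\<And>b. b \<in> F \<Longrightarrow> sq_int (B b)"
  shows "sq_int (\<lambda>x. \<Sum>b\<in>F. c b * B b x)"
  using assms
proof (induction F rule: infinite_finite_induct)
  case (insert b F) then show ?case
    by (simp add: sq_int_add sq_int_cmult)
qed (auto simp: sq_int_zero)

lemma integrable_prod:
  assumes "sq_int f" "sq_int g" shows "integrable lborel (\<lambda>x. f x * cnj (g x))"
proof (rule Bochner_Integration.integrable_bound[where f="\<lambda>x. (cmod (f x))^2 + (cmod (g x))^2"])
  show "integrable lborel (\<lambda>x. (cmod (f x))^2 + (cmod (g x))^2)"
    using assms by (auto simp: sq_int_def)
  show "(\<lambda>x. f x * cnj (g x)) \<in> borel_measurable lborel"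
    by (rule borel_measurable_times[OF sq_intD(1)[OF assms(1)] borel_measurable_cnj'[OF sq_intD(1)[OF assms(2)]]])
  show "AE x in lborel. norm (f x * cnj (g x)) \<le> norm ((cmod (f x))^2 + (cmod (g x))^2)"
  proof (rule AE_I2)
    fix x
    have "2 * cmod (f x) * cmod (g x) \<le> (cmod (f x))^2 + (cmod (g x))^2"
      by (rule sum_squares_bound)
    moreover have "0 \<le> cmod (f x) * cmod (g x)" by simp
    ultimately have "cmod (f x) * cmod (g x) \<le> (cmod (f x))^2 + (cmod (g x))^2"
      by linarith
    then show "norm (f x * cnj (g x)) \<le> norm ((cmod (f x))^2 + (cmod (g x))^2)"
      by (simp add: norm_mult)
  qed
qed

lemma ip_add1: "sq_int f \<Longrightarrow> sq_int g \<Longrightarrow> sq_int h \<Longrightarrow> ip (\<lambda>x. f x + g x) h = ip f h + ip g h"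
  unfolding ip_def by (simp add: distrib_right integrable_prod)

lemma ip_cmult1: "ip (\<lambda>x. c * f x) h = c * ip f h"
  unfolding ip_def by (simp add: mult.assoc)

lemma ip_cnj: "ip g f = cnj (ip f g)"
proof -
  have "ip g f = (LINT x|lborel. cnj (f x * cnj (g x)))"
    by (simp add: ip_def mult.commute del: integral_cnj)
  also have "\<dots> = cnj (ip f g)" unfolding ip_def by (rule Bochner_Integration.integral_cnj)
  finally show ?thesis .
qed

lemma ip_add2: assumes "sq_int f" "sq_int g" "sq_int h" shows "ip h (\<lambda>x. f x + g x) = ip h f + ip h g"
proof -
  have "ip h (\<lambda>x. f x + g x) = cnj (ip (\<lambda>x. f x + g x) h)" by (rule ip_cnj)
  also have "\<dots> = cnj (ip f h + ip g h)" by (simp only: ip_add1[OF assms])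
  also have "\<dots> = ip h f + ip h g" by (simp only: complex_cnj_add ip_cnj[of h f, symmetric] ip_cnj[of h g, symmetric])
  finally show ?thesis .
qed

lemma ip_cmult2: "ip h (\<lambda>x. c * f x) = cnj c * ip h f"
proof -
  have "ip h (\<lambda>x. c * f x) = cnj (ip (\<lambda>x. c * f x) h)" by (rule ip_cnj)
  also have "\<dots> = cnj (c * ip f h)" by (simp only: ip_cmult1)
  also have "\<dots> = cnj c * ip h f" by (simp only: complex_cnj_mult ip_cnj[of h f, symmetric])
  finally show ?thesis .
qed

lemma ip_diff1: "sq_int f \<Longrightarrow> sq_int g \<Longrightarrow> sq_int h \<Longrightarrow> ip (\<lambda>x. f x - g x) h = ip f h - ip g h"
  unfolding ip_def by (simp add: left_diff_distrib integrable_prod)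

lemma ip_diff2: assumes "sq_int f" "sq_int g" "sq_int h" shows "ip h (\<lambda>x. f x - g x) = ip h f - ip h g"
proof -
  have "ip h (\<lambda>x. f x - g x) = cnj (ip (\<lambda>x. f x - g x) h)" by (rule ip_cnj)
  also have "\<dots> = cnj (ip f h - ip g h)" by (simp only: ip_diff1[OF assms])
  also have "\<dots> = ip h f - ip h g" by (simp only: complex_cnj_diff ip_cnj[of h f, symmetric] ip_cnj[of h g, symmetric])
  finally show ?thesis .
qed

lemma ip_sum1: assumes "\<And>b. b \<in> F \<Longrightarrow> sq_int (B b)" "sq_int h"
  shows "ip (\<lambda>x. \<Sum>b\<in>F. c b * B b x) h = (\<Sum>b\<in>F. c b * ip (B b) h)"
  using assms
proof (induction F rule: infinite_finite_induct)
  case (infinite F) then show ?case by (simp add: ip_def)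
next
  case empty then show ?case by (simp add: ip_def)
next
  case (insert b F)
  have sb: "sq_int (B b)" using insert.prems by simp
  have sF: "sq_int (\<lambda>x. \<Sum>b\<in>F. c b * B b x)" by (rule sq_int_sum) (use insert.prems in simp)
  have IH: "ip (\<lambda>x. \<Sum>b\<in>F. c b * B b x) h = (\<Sum>b\<in>F. c b * ip (B b) h)"
    by (rule insert.IH) (use insert.prems in simp_all)
  have "ip (\<lambda>x. \<Sum>b\<in>insert b F. c b * B b x) h = ip (\<lambda>x. c b * B b x + (\<Sum>b\<in>F. c b * B b x)) h"
    using insert.hyps by simp
  also have "\<dots> = ip (\<lambda>x. c b * B b x) h + ip (\<lambda>x. \<Sum>b\<in>F. c b * B b x) h"
    by (rule ip_add1[OF sq_int_cmult[OF sb] sF insert.prems(2)])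
  also have "\<dots> = c b * ip (B b) h + (\<Sum>b\<in>F. c b * ip (B b) h)"
    by (simp only: ip_cmult1 IH)
  finally show ?case using insert.hyps by simp
qed

lemma ip_sum2: assumes "\<And>b. b \<in> F \<Longrightarrow> sq_int (B b)" "sq_int h"
  shows "ip h (\<lambda>x. \<Sum>b\<in>F. c b * B b x) = (\<Sum>b\<in>F. cnj (c b) * ip h (B b))"
proof -
  have e: "\<And>b. ip h (B b) = cnj (ip (B b) h)" by (rule ip_cnj)
  have "ip h (\<lambda>x. \<Sum>b\<in>F. c b * B b x) = cnj (ip (\<lambda>x. \<Sum>b\<in>F. c b * B b x) h)" by (rule ip_cnj)
  also have "\<dots> = cnj (\<Sum>b\<in>F. c b * ip (B b) h)" by (simp only: ip_sum1[OF assms])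
  also have "\<dots> = (\<Sum>b\<in>F. cnj (c b) * ip h (B b))" by (simp only: cnj_sum complex_cnj_mult e)
  finally show ?thesis .
qed

lemma ip_self: "ip f f = complex_of_real (n2 f)"
proof -
  have "ip f f = (LINT x|lborel. complex_of_real ((cmod (f x))^2))"
    unfolding ip_def by (rule Bochner_Integration.integral_cong[OF refl]) (rule complex_norm_square[symmetric])
  also have "\<dots> = complex_of_real (n2 f)" unfolding n2_def by (rule integral_complex_of_real)
  finally show ?thesis .
qed

lemma n2_nonneg: "0 \<le> n2 f"
  unfolding n2_def by simp

lemma n2_diff_expand:
  assumes "sq_int f" "sq_int g"
  shows "complex_of_real (n2 (\<lambda>x. f x - g x)) = ip f f - ip f g - ip g f + ip g g"
  using assms by (simp add: ip_self[symmetric] ip_diff1 ip_diff2 sq_int_diff)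

lemma ip_bound:
  assumes "sq_int u" "sq_int v" "d > 0"
  shows "cmod (ip u v) \<le> (n2 u / d + d * n2 v) / 2"
proof -
  have "cmod (ip u v) \<le> (LINT x|lborel. cmod (u x * cnj (v x)))"
    unfolding ip_def by (rule integral_norm_bound)
  also have "\<dots> \<le> (LINT x|lborel. ((cmod (u x))^2 / d + d * (cmod (v x))^2) / 2)"
  proof (rule integral_mono)
    show "integrable lborel (\<lambda>x. cmod (u x * cnj (v x)))" using integrable_prod[OF assms(1,2)] by simp
    show "integrable lborel (\<lambda>x. ((cmod (u x))^2 / d + d * (cmod (v x))^2) / 2)"
      using assms by (auto simp: sq_int_def)
    fix x
    have "0 \<le> (cmod (u x) - d * cmod (v x))^2" by simp
    hence "2 * d * (cmod (u x) * cmod (v x)) \<le> (cmod (u x))^2 + d^2 * (cmod (v x))^2"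
      by (simp add: power2_diff power_mult_distrib algebra_simps)
    hence "cmod (u x) * cmod (v x) \<le> ((cmod (u x))^2 / d + d * (cmod (v x))^2) / 2"
      using assms(3) by (simp add: field_simps power2_eq_square)
    then show "cmod (u x * cnj (v x)) \<le> ((cmod (u x))^2 / d + d * (cmod (v x))^2) / 2"
      by (simp add: norm_mult)
  qed
  also have "\<dots> = (n2 u / d + d * n2 v) / 2"
    using assms unfolding n2_def by (simp add: sq_int_def)
  finally show ?thesis .
qed


definition onsys :: "('b \<Rightarrow> real \<Rightarrow> complex) \<Rightarrow> bool" where
  "onsys B \<longleftrightarrow> (\<forall>b. sq_int (B b)) \<and> (\<forall>a b. ip (B a) (B b) = (if a = b then 1 else 0))"

definition cmpl :: "('b \<Rightarrow> real \<Rightarrow> complex) \<Rightarrow> bool" where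
  "cmpl B \<longleftrightarrow> (\<forall>h. sq_int h \<and> (\<forall>b. ip h (B b) = 0) \<longrightarrow> (AE x in lborel. h x = 0))"

lemma onsysD: "onsys B \<Longrightarrow> sq_int (B b)" "onsys B \<Longrightarrow> ip (B a) (B b) = (if a = b then 1 else 0)"
  by (auto simp: onsys_def)

lemma mult_cnj_norm: "c * cnj c = complex_of_real ((cmod c)^2)"
  by (rule complex_norm_square[symmetric])

lemma ip_sum_B:
  assumes "onsys B" "finite G"
  shows "ip (\<lambda>x. \<Sum>b\<in>G. c b * B b x) (B a) = (if a \<in> G then c a else 0)"
proof -
  have "ip (\<lambda>x. \<Sum>b\<in>G. c b * B b x) (B a) = (\<Sum>b\<in>G. c b * ip (B b) (B a))"
    by (rule ip_sum1) (use assms in \<open>auto simp: onsysD\<close>)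
  also have "\<dots> = (\<Sum>b\<in>G. if b = a then c b else 0)"
    by (rule sum.cong) (auto simp: onsysD[OF assms(1)])
  also have "\<dots> = (if a \<in> G then c a else 0)"
    using assms(2) by (simp add: sum.delta')
  finally show ?thesis .
qed

lemma n2_sum:
  assumes "onsys B" "finite G"
  shows "n2 (\<lambda>x. \<Sum>b\<in>G. c b * B b x) = (\<Sum>b\<in>G. (cmod (c b))^2)"
proof -
  have sB: "\<And>b. sq_int (B b)" using assms by (simp add: onsysD)
  let ?P = "\<lambda>x. \<Sum>b\<in>G. c b * B b x"
  have "complex_of_real (n2 ?P) = ip ?P ?P" by (simp add: ip_self)
  also have "\<dots> = (\<Sum>b\<in>G. cnj (c b) * ip ?P (B b))"
    by (rule ip_sum2) (auto intro: sB sq_int_sum)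
  also have "\<dots> = (\<Sum>b\<in>G. cnj (c b) * c b)"
    by (rule sum.cong) (auto simp: ip_sum_B[OF assms])
  also have "\<dots> = (\<Sum>b\<in>G. complex_of_real ((cmod (c b))^2))"
    by (rule sum.cong) (auto simp: mult.commute[of "cnj _"] mult_cnj_norm)
  also have "\<dots> = complex_of_real (\<Sum>b\<in>G. (cmod (c b))^2)" by simp
  finally show ?thesis by (simp only: of_real_eq_iff)
qed

lemma bessel:
  assumes "onsys B" "finite G" "sq_int f"
  shows "(\<Sum>b\<in>G. (cmod (ip f (B b)))^2) \<le> n2 f"
proof -
  have sB: "\<And>b. sq_int (B b)" using assms by (simp add: onsysD)
  define c where "c b = ip f (B b)" for b
  let ?P = "\<lambda>x. \<Sum>b\<in>G. c b * B b x"
  have sP: "sq_int ?P" by (rule sq_int_sum) (rule sB)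
  define S where "S = (\<Sum>b\<in>G. (cmod (c b))^2)"
  have e1: "ip f ?P = complex_of_real S"
  proof -
    have "ip f ?P = (\<Sum>b\<in>G. cnj (c b) * ip f (B b))" by (rule ip_sum2) (auto intro: sB assms)
    also have "\<dots> = (\<Sum>b\<in>G. complex_of_real ((cmod (c b))^2))"
      by (rule sum.cong) (auto simp: c_def mult.commute[of "cnj _"] mult_cnj_norm)
    finally show ?thesis by (simp add: S_def)
  qed
  have e2: "ip ?P f = complex_of_real S"
    using e1 ip_cnj[of ?P f] by simp
  have e3: "ip ?P ?P = complex_of_real S"
    by (simp add: ip_self n2_sum[OF assms(1,2)] S_def)
  have "complex_of_real (n2 (\<lambda>x. f x - ?P x)) = ip f f - ip f ?P - ip ?P f + ip ?P ?P"
    by (rule n2_diff_expand[OF assms(3) sP])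
  also have "\<dots> = complex_of_real (n2 f - S)" by (simp add: e1 e2 e3 ip_self)
  finally have "n2 (\<lambda>x. f x - ?P x) = n2 f - S" by (simp only: of_real_eq_iff)
  with n2_nonneg[of "\<lambda>x. f x - ?P x"] show ?thesis by (simp add: S_def c_def)
qed


lemma int_bound:
  assumes "sq_int u" "sq_int v" "d > 0"
  shows "(LINT x|lborel. cmod (u x * cnj (v x))) \<le> (n2 u / d + d * n2 v) / 2"
proof -
  have "(LINT x|lborel. cmod (u x * cnj (v x))) \<le> (LINT x|lborel. ((cmod (u x))^2 / d + d * (cmod (v x))^2) / 2)"
  proof (rule integral_mono)
    show "integrable lborel (\<lambda>x. cmod (u x * cnj (v x)))" using integrable_prod[OF assms(1,2)] by simp
    show "integrable lborel (\<lambda>x. ((cmod (u x))^2 / d + d * (cmod (v x))^2) / 2)"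
      using assms by (auto simp: sq_int_def)
    fix x
    have "0 \<le> (cmod (u x) - d * cmod (v x))^2" by simp
    hence "2 * d * (cmod (u x) * cmod (v x)) \<le> (cmod (u x))^2 + d^2 * (cmod (v x))^2"
      by (simp add: power2_diff power_mult_distrib algebra_simps)
    hence "cmod (u x) * cmod (v x) \<le> ((cmod (u x))^2 / d + d * (cmod (v x))^2) / 2"
      using assms(3) by (simp add: field_simps power2_eq_square)
    then show "cmod (u x * cnj (v x)) \<le> ((cmod (u x))^2 / d + d * (cmod (v x))^2) / 2"
      by (simp add: norm_mult)
  qed
  also have "\<dots> = (n2 u / d + d * n2 v) / 2"
    using assms unfolding n2_def by (simp add: sq_int_def)
  finally show ?thesis .
qed

definition wgt :: "real \<Rightarrow> complex" where
  "wgt x = complex_of_real (sqrt (std_normal_density x))"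

lemma sq_int_wgt: "sq_int wgt"
proof -
  have "(\<lambda>x. (cmod (wgt x))^2) = std_normal_density"
    by (auto simp: wgt_def normal_density_nonneg)
  then show ?thesis unfolding sq_int_def wgt_def by auto
qed

lemma wgt_pos: "wgt x \<noteq> 0"
  using normal_density_pos[of 1 0 x] by (simp add: wgt_def)

lemma L2_complete:
  fixes s :: "nat \<Rightarrow> real \<Rightarrow> complex"
  assumes sq: "\<And>n. sq_int (s n)"
    and cau: "\<And>e. e > 0 \<Longrightarrow> \<exists>N. \<forall>i\<ge>N. \<forall>j\<ge>N. n2 (\<lambda>x. s i x - s j x) < e"
  shows "\<exists>g. sq_int g \<and> (\<lambda>n. n2 (\<lambda>x. g x - s n x)) \<longlonglongrightarrow> 0"
proof -
  have sm[measurable]: "\<And>n. s n \<in> borel_measurable borel" using sq by (simp add: sq_int_def)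
  define u where "u n x = s n x * cnj (wgt x)" for n x
  have iu: "integrable lborel (u n)" for n
    unfolding u_def by (rule integrable_prod[OF sq sq_int_wgt])
  have "\<exists>N. \<forall>i\<ge>N. \<forall>j\<ge>N. (LINT x|lborel. norm (u i x - u j x)) < e" if e: "e > 0" for e
  proof -
    define d where "d = e / (n2 wgt + 1)"
    have d: "d > 0" using e n2_nonneg[of wgt] by (simp add: d_def)
    have dW: "d * n2 wgt < e"
    proof -
      have "d * n2 wgt = e * (n2 wgt / (n2 wgt + 1))" by (simp add: d_def)
      also have "\<dots> < e * 1"
        using e n2_nonneg[of wgt] by (intro mult_strict_left_mono) auto
      finally show ?thesis by simp
    qed
    obtain N where N: "\<And>i j. i \<ge> N \<Longrightarrow> j \<ge> N \<Longrightarrow> n2 (\<lambda>x. s i x - s j x) < d * e"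
      using cau[of "d * e"] d e by auto
    show ?thesis
    proof (intro exI allI impI)
      fix i j assume ij: "N \<le> i" "N \<le> j"
      have "(LINT x|lborel. norm (u i x - u j x)) = (LINT x|lborel. cmod ((s i x - s j x) * cnj (wgt x)))"
        by (simp add: u_def left_diff_distrib)
      also have "\<dots> \<le> (n2 (\<lambda>x. s i x - s j x) / d + d * n2 wgt) / 2"
        by (rule int_bound[OF sq_int_diff[OF sq sq] sq_int_wgt d])
      also have "\<dots> < e"
      proof -
        have "n2 (\<lambda>x. s i x - s j x) / d < e" using N[OF ij] d by (simp add: field_simps)
        then show ?thesis using dW by simp
      qed
      finally show "(LINT x|lborel. norm (u i x - u j x)) < e" .
    qed
  qed
  then obtain r where r: "strict_mono r" and aec: "AE x in lborel. Cauchy (\<lambda>i. u (r i) x)"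
    using cauchy_L1_AE_cauchy_subseq[of lborel u] iu by metis
  define g where "g x = lim (\<lambda>i. s (r i) x)" for x
  have gm[measurable]: "g \<in> borel_measurable borel"
    unfolding g_def by measurable
  have aeconv: "AE x in lborel. (\<lambda>i. s (r i) x) \<longlonglongrightarrow> g x"
    using aec
  proof (rule AE_mp, intro AE_I2 impI)
    fix x assume "Cauchy (\<lambda>i. u (r i) x)"
    then have "convergent (\<lambda>i. u (r i) x)" by (simp add: Cauchy_convergent_iff)
    then obtain L where L: "(\<lambda>i. u (r i) x) \<longlonglongrightarrow> L" by (auto simp: convergent_def)
    have "(\<lambda>i. u (r i) x / cnj (wgt x)) \<longlonglongrightarrow> L / cnj (wgt x)"
      by (intro tendsto_divide L tendsto_const) (simp add: wgt_pos)
    moreover have "\<And>i. u (r i) x / cnj (wgt x) = s (r i) x" by (simp add: u_def wgt_pos)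
    ultimately have "convergent (\<lambda>i. s (r i) x)" by (auto simp: convergent_def)
    then show "(\<lambda>i. s (r i) x) \<longlonglongrightarrow> g x" unfolding g_def by (simp add: convergent_LIMSEQ_iff)
  qed
  have key: "(\<integral>\<^sup>+x. ennreal ((cmod (g x - s n x))^2) \<partial>lborel) \<le> ennreal e"
    if e: "e > 0" and n: "\<And>i. i \<ge> n \<Longrightarrow> n2 (\<lambda>x. s i x - s n x) < e" for n e
  proof -
    have "(\<integral>\<^sup>+x. ennreal ((cmod (g x - s n x))^2) \<partial>lborel)
        = (\<integral>\<^sup>+x. liminf (\<lambda>i. ennreal ((cmod (s (r i) x - s n x))^2)) \<partial>lborel)"
    proof (rule nn_integral_cong_AE)
      show "AE x in lborel. ennreal ((cmod (g x - s n x))^2) = liminf (\<lambda>i. ennreal ((cmod (s (r i) x - s n x))^2))"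
        using aeconv
      proof (rule AE_mp, intro AE_I2 impI)
        fix x assume "(\<lambda>i. s (r i) x) \<longlonglongrightarrow> g x"
        then have T: "(\<lambda>i. ennreal ((cmod (s (r i) x - s n x))^2)) \<longlonglongrightarrow> ennreal ((cmod (g x - s n x))^2)"
          by (intro tendsto_ennrealI tendsto_intros)
        have "liminf (\<lambda>i. ennreal ((cmod (s (r i) x - s n x))^2)) = ennreal ((cmod (g x - s n x))^2)"
          by (rule lim_imp_Liminf[OF _ T]) simp
        then show "ennreal ((cmod (g x - s n x))^2) = liminf (\<lambda>i. ennreal ((cmod (s (r i) x - s n x))^2))"
          by simp
      qed
    qed
    also have "\<dots> \<le> liminf (\<lambda>i. \<integral>\<^sup>+x. ennreal ((cmod (s (r i) x - s n x))^2) \<partial>lborel)"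
      by (rule nn_integral_liminf) measurable
    also have "\<dots> \<le> ennreal e"
    proof (rule Liminf_le)
      show "\<forall>\<^sub>F i in sequentially. (\<integral>\<^sup>+x. ennreal ((cmod (s (r i) x - s n x))^2) \<partial>lborel) \<le> ennreal e"
      proof (rule eventually_sequentiallyI[of n])
        fix i assume i: "n \<le> i"
        have "r i \<ge> i" using r by (rule strict_mono_imp_increasing)
        have "(\<integral>\<^sup>+x. ennreal ((cmod (s (r i) x - s n x))^2) \<partial>lborel) = ennreal (n2 (\<lambda>x. s (r i) x - s n x))"
          unfolding n2_def
          by (rule nn_integral_eq_integral) (use sq_int_diff[OF sq sq] in \<open>auto simp: sq_int_def\<close>)
        also have "\<dots> \<le> ennreal e" using n[of "r i"] \<open>r i \<ge> i\<close> i by (intro ennreal_leI) auto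
        finally show "(\<integral>\<^sup>+x. ennreal ((cmod (s (r i) x - s n x))^2) \<partial>lborel) \<le> ennreal e" .
      qed
    qed simp
    finally show ?thesis .
  qed
  have good: "sq_int (\<lambda>x. g x - s n x) \<and> n2 (\<lambda>x. g x - s n x) \<le> e"
    if e: "e > 0" and n: "\<And>i. i \<ge> n \<Longrightarrow> n2 (\<lambda>x. s i x - s n x) < e" for n e
  proof -
    have k: "(\<integral>\<^sup>+x. ennreal ((cmod (g x - s n x))^2) \<partial>lborel) \<le> ennreal e" by (rule key[OF e n])
    have int: "integrable lborel (\<lambda>x. (cmod (g x - s n x))^2)"
      by (rule integrableI_nonneg) (use k in \<open>auto simp: top.not_eq_extremum intro: le_less_trans\<close>)
    have "ennreal (n2 (\<lambda>x. g x - s n x)) \<le> ennreal e"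
      using k unfolding n2_def by (subst nn_integral_eq_integral[symmetric]) (use int in auto)
    then have "n2 (\<lambda>x. g x - s n x) \<le> e" using e by (simp add: ennreal_le_iff2)
    moreover have "sq_int (\<lambda>x. g x - s n x)" unfolding sq_int_def using int by auto
    ultimately show ?thesis by simp
  qed
  obtain N1 where N1: "\<And>i j. i \<ge> N1 \<Longrightarrow> j \<ge> N1 \<Longrightarrow> n2 (\<lambda>x. s i x - s j x) < 1"
    using cau[of 1] by auto
  have "sq_int (\<lambda>x. g x - s N1 x)" using good[of 1 N1] N1 by auto
  from sq_int_add[OF this sq[of N1]] have sg: "sq_int g" by simp
  have "(\<lambda>n. n2 (\<lambda>x. g x - s n x)) \<longlonglongrightarrow> 0"
  proof (rule LIMSEQ_I)
    fix e :: real assume e: "e > 0"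
    obtain N where N: "\<And>i j. i \<ge> N \<Longrightarrow> j \<ge> N \<Longrightarrow> n2 (\<lambda>x. s i x - s j x) < e / 2"
      using cau[of "e/2"] e by auto
    show "\<exists>no. \<forall>n\<ge>no. norm (n2 (\<lambda>x. g x - s n x) - 0) < e"
    proof (intro exI allI impI)
      fix n assume n: "N \<le> n"
      have "n2 (\<lambda>x. g x - s n x) \<le> e / 2" using good[of "e/2" n] N n e by auto
      then show "norm (n2 (\<lambda>x. g x - s n x) - 0) < e" using n2_nonneg[of "\<lambda>x. g x - s n x"] e by simp
    qed
  qed
  with sg show ?thesis by blast
qed


definition FN :: "nat \<Rightarrow> 'b::countable set" where
  "FN N = {b. to_nat b < N}"

definition tt :: "('b::countable \<Rightarrow> 'c::zero) \<Rightarrow> nat \<Rightarrow> 'c" where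
  "tt t n = (if n \<in> range (to_nat :: 'b \<Rightarrow> nat) then t (from_nat n) else 0)"

lemma finite_FN: "finite (FN N :: 'b::countable set)"
proof -
  have "(FN N :: 'b set) = to_nat -` {..<N}" by (auto simp: FN_def)
  then show ?thesis using finite_vimageI[OF finite_lessThan[of N] inj_to_nat] by simp
qed

lemma tt_to_nat: "tt t (to_nat b) = t b"
  by (simp add: tt_def)

lemma tt_sum:
  fixes t :: "'b::countable \<Rightarrow> 'c::comm_monoid_add"
  shows "(\<Sum>n<N. tt t n) = (\<Sum>b\<in>FN N. t b)"
proof -
  have "(\<Sum>b\<in>FN N. t b) = (\<Sum>b\<in>FN N. tt t (to_nat (b::'b)))" by (rule sum.cong) (simp_all add: tt_def)
  also have "\<dots> = (\<Sum>n\<in>to_nat ` (FN N :: 'b set). tt t n)"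
    by (subst sum.reindex) (auto simp: inj_on_def)
  also have "\<dots> = (\<Sum>n<N. tt t n)"
    by (rule sum.mono_neutral_left) (auto simp: FN_def tt_def)
  finally show ?thesis by simp
qed

lemma tt_has_sum:
  fixes t :: "'b::countable \<Rightarrow> 'c::banach"
  assumes "summable (\<lambda>n. norm (tt t n))" "(\<lambda>N. \<Sum>b\<in>FN N. t b) \<longlonglongrightarrow> s"
  shows "(t has_sum s) UNIV"
proof -
  have "tt t sums s" unfolding sums_def using assms(2) by (simp add: tt_sum)
  then have "(tt t has_sum s) UNIV" by (rule norm_summable_imp_has_sum[OF assms(1)])
  then have "(tt t has_sum s) (range (to_nat :: 'b \<Rightarrow> nat))"
    by (subst (asm) has_sum_cong_neutral[where T="range (to_nat :: 'b \<Rightarrow> nat)" and g="tt t"]) (auto simp: tt_def)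
  then have "((tt t \<circ> to_nat) has_sum s) (UNIV :: 'b set)"
    by (subst (asm) has_sum_reindex) (simp_all add: inj_on_def)
  moreover have "tt t \<circ> to_nat = t" by (simp add: fun_eq_iff tt_to_nat)
  ultimately show ?thesis by simp
qed

lemma bessel_summable:
  fixes B :: "'b::countable \<Rightarrow> real \<Rightarrow> complex"
  assumes "onsys B" "sq_int f"
  shows "summable (tt (\<lambda>b. (cmod (ip f (B b)))^2))"
proof (rule bounded_imp_summable)
  show "\<And>n. 0 \<le> tt (\<lambda>b. (cmod (ip f (B b)))^2) n" by (simp add: tt_def)
  fix n
  have "(\<Sum>k\<le>n. tt (\<lambda>b. (cmod (ip f (B b)))^2) k) = (\<Sum>k<Suc n. tt (\<lambda>b. (cmod (ip f (B b)))^2) k)"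
    by (simp add: lessThan_Suc_atMost)
  also have "\<dots> = (\<Sum>b\<in>FN (Suc n). (cmod (ip f (B b)))^2)" by (rule tt_sum)
  also have "\<dots> \<le> n2 f" by (rule bessel[OF assms(1) finite_FN assms(2)])
  finally show "(\<Sum>k\<le>n. tt (\<lambda>b. (cmod (ip f (B b)))^2) k) \<le> n2 f" .
qed

lemma ip_tendsto0:
  assumes "sq_int v" "\<And>n. sq_int (w n)" "(\<lambda>n. n2 (w n)) \<longlonglongrightarrow> 0"
  shows "(\<lambda>n. ip (w n) v) \<longlonglongrightarrow> 0"
proof (rule LIMSEQ_I)
  fix e :: real assume e: "e > 0"
  define d where "d = e / (n2 v + 1)"
  have d: "d > 0" using e n2_nonneg[of v] by (simp add: d_def)
  have dW: "d * n2 v < e"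
  proof -
    have "d * n2 v = e * (n2 v / (n2 v + 1))" by (simp add: d_def)
    also have "\<dots> < e * 1"
      using e n2_nonneg[of v] by (intro mult_strict_left_mono) auto
    finally show ?thesis by simp
  qed
  from LIMSEQ_D[OF assms(3), of "d * e"] d e obtain N where N: "\<And>n. n \<ge> N \<Longrightarrow> norm (n2 (w n) - 0) < d * e"
    by auto
  show "\<exists>no. \<forall>n\<ge>no. norm (ip (w n) v - 0) < e"
  proof (intro exI allI impI)
    fix n assume n: "N \<le> n"
    have "cmod (ip (w n) v) \<le> (n2 (w n) / d + d * n2 v) / 2"
      by (rule ip_bound[OF assms(2) assms(1) d])
    also have "\<dots> < e"
    proof -
      have "n2 (w n) < d * e" using N[OF n] n2_nonneg[of "w n"] by simp
      then have "n2 (w n) / d < e" using d by (simp add: field_simps)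
      then show ?thesis using dW by simp
    qed
    finally show "norm (ip (w n) v - 0) < e" by simp
  qed
qed

lemma n2_swap: "n2 (\<lambda>x. f x - g x) = n2 (\<lambda>x. g x - f x)"
  unfolding n2_def by (simp add: norm_minus_commute)


lemma parseval:
  fixes B :: "'b::countable \<Rightarrow> real \<Rightarrow> complex"
  assumes ons: "onsys B" and cm: "cmpl B" and sf: "sq_int f" and sv: "sq_int v"
  shows "((\<lambda>b. ip f (B b) * ip (B b) v) has_sum ip f v) UNIV"
proof -
  have sB: "\<And>b. sq_int (B b)" using ons by (simp add: onsysD)
  define c where "c b = ip f (B b)" for b
  define S where "S N x = (\<Sum>b\<in>FN N. c b * B b x)" for N x
  have sS: "\<And>N. sq_int (S N)" unfolding S_def by (rule sq_int_sum) (rule sB)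
  define a where "a = tt (\<lambda>b. (cmod (c b))^2)"
  have sa: "summable a" unfolding a_def c_def by (rule bessel_summable[OF ons sf])
  have FN_mono: "FN j \<subseteq> FN i" if "j \<le> i" for i j :: nat
    using that by (auto simp: FN_def)
  have n2S: "n2 (\<lambda>x. S i x - S j x) = (\<Sum>n\<in>{j..<i}. a n)" if ji: "j \<le> i" for i j
  proof -
    have "(\<lambda>x. S i x - S j x) = (\<lambda>x. \<Sum>b\<in>FN i - FN j. c b * B b x)"
    proof
      fix x
      show "S i x - S j x = (\<Sum>b\<in>FN i - FN j. c b * B b x)"
        unfolding S_def using sum.subset_diff[OF FN_mono[OF ji] finite_FN, of "\<lambda>b. c b * B b x"] by simp
    qed
    then have "n2 (\<lambda>x. S i x - S j x) = (\<Sum>b\<in>FN i - FN j. (cmod (c b))^2)"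
      by (simp add: n2_sum[OF ons] finite_FN)
    also have "\<dots> = (\<Sum>b\<in>FN i. (cmod (c b))^2) - (\<Sum>b\<in>FN j. (cmod (c b))^2)"
      using sum.subset_diff[OF FN_mono[OF ji] finite_FN, of "\<lambda>b. (cmod (c b))^2"] by simp
    also have "\<dots> = (\<Sum>n<i. a n) - (\<Sum>n<j. a n)" by (simp add: a_def tt_sum)
    also have "\<dots> = (\<Sum>n\<in>{j..<i}. a n)"
      using sum.atLeastLessThan_concat[of 0 j i a] ji by (simp add: atLeast0LessThan)
    finally show ?thesis .
  qed
  have cau: "\<exists>N. \<forall>i\<ge>N. \<forall>j\<ge>N. n2 (\<lambda>x. S i x - S j x) < e" if e: "e > 0" for e
  proof -
    obtain N where N: "\<And>m n. m \<ge> N \<Longrightarrow> norm (sum a {m..<n}) < e"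
      using sa e unfolding summable_Cauchy by blast
    have "n2 (\<lambda>x. S i x - S j x) < e" if "i \<ge> N" "j \<ge> N" for i j
    proof (cases "j \<le> i")
      case True
      have "n2 (\<lambda>x. S i x - S j x) = sum a {j..<i}" by (rule n2S[OF True])
      also have "\<dots> \<le> norm (sum a {j..<i})" by simp
      also have "\<dots> < e" using N that by simp
      finally show ?thesis .
    next
      case False
      have "n2 (\<lambda>x. S i x - S j x) = n2 (\<lambda>x. S j x - S i x)" by (rule n2_swap)
      also have "\<dots> = sum a {i..<j}" using False by (intro n2S) simp
      also have "\<dots> \<le> norm (sum a {i..<j})" by simp
      also have "\<dots> < e" using N that by simp
      finally show ?thesis .
    qed
    then show ?thesis by blast
  qed
  obtain g where sg: "sq_int g" and gl: "(\<lambda>n. n2 (\<lambda>x. g x - S n x)) \<longlonglongrightarrow> 0"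
    using L2_complete[of S, OF sS cau] by blast
  have ipg: "ip g (B b) = c b" for b
  proof -
    have T: "(\<lambda>n. ip (\<lambda>x. g x - S n x) (B b)) \<longlonglongrightarrow> 0"
      by (rule ip_tendsto0[OF sB _ gl]) (intro sq_int_diff sg sS)
    have ev: "\<forall>\<^sub>F n in sequentially. ip (\<lambda>x. g x - S n x) (B b) = ip g (B b) - c b"
    proof (rule eventually_sequentiallyI[of "Suc (to_nat b)"])
      fix n assume n: "Suc (to_nat b) \<le> n"
      have "ip (\<lambda>x. g x - S n x) (B b) = ip g (B b) - ip (S n) (B b)"
        by (rule ip_diff1[OF sg sS sB])
      also have "ip (S n) (B b) = c b"
      proof -
        have "b \<in> FN n" using n by (simp add: FN_def)
        then show ?thesis unfolding S_def[abs_def] by (simp add: ip_sum_B[OF ons finite_FN])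
      qed
      finally show "ip (\<lambda>x. g x - S n x) (B b) = ip g (B b) - c b" .
    qed
    have "(\<lambda>n. ip g (B b) - c b) \<longlonglongrightarrow> 0"
      by (rule Lim_transform_eventually[OF T ev])
    then have "ip g (B b) - c b = 0" by (simp add: LIMSEQ_const_iff)
    then show ?thesis by simp
  qed
  have "AE x in lborel. f x - g x = 0"
  proof -
    have "\<forall>b. ip (\<lambda>x. f x - g x) (B b) = 0"
      by (simp add: ip_diff1[OF sf sg sB] ipg c_def)
    then show ?thesis using cm sq_int_diff[OF sf sg] unfolding cmpl_def by blast
  qed
  then have fg: "AE x in lborel. f x = g x" by simp
  have fl: "(\<lambda>n. n2 (\<lambda>x. f x - S n x)) \<longlonglongrightarrow> 0"
  proof -
    have "n2 (\<lambda>x. f x - S n x) = n2 (\<lambda>x. g x - S n x)" for n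
      unfolding n2_def by (rule integral_cong_AE) (use fg borel_measurable_integrable[OF sq_intD(2)[OF sq_int_diff[OF sf sS]]] borel_measurable_integrable[OF sq_intD(2)[OF sq_int_diff[OF sg sS]]] in auto)
    then show ?thesis using gl by simp
  qed
  have T2: "(\<lambda>n. ip (\<lambda>x. f x - S n x) v) \<longlonglongrightarrow> 0"
    by (rule ip_tendsto0[OF sv _ fl]) (intro sq_int_diff sf sS)
  have "(\<lambda>n. ip f v - ip (\<lambda>x. f x - S n x) v) \<longlonglongrightarrow> ip f v - 0"
    by (intro tendsto_intros T2)
  moreover have "ip f v - ip (\<lambda>x. f x - S n x) v = (\<Sum>b\<in>FN n. c b * ip (B b) v)" for n
  proof -
    have "ip (\<lambda>x. f x - S n x) v = ip f v - ip (S n) v" by (rule ip_diff1[OF sf sS sv])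
    moreover have "ip (S n) v = (\<Sum>b\<in>FN n. c b * ip (B b) v)"
      unfolding S_def[abs_def] by (rule ip_sum1[OF sB sv])
    ultimately show ?thesis by simp
  qed
  ultimately have lim: "(\<lambda>n. \<Sum>b\<in>FN n. c b * ip (B b) v) \<longlonglongrightarrow> ip f v" by simp
  have sm: "summable (\<lambda>n. norm (tt (\<lambda>b. c b * ip (B b) v) n))"
  proof (rule summable_comparison_test)
    show "summable (\<lambda>n. a n + tt (\<lambda>b. (cmod (ip v (B b)))^2) n)"
      by (intro summable_add sa bessel_summable[OF ons sv])
    show "\<exists>N. \<forall>n\<ge>N. norm (norm (tt (\<lambda>b. c b * ip (B b) v) n)) \<le> a n + tt (\<lambda>b. (cmod (ip v (B b)))^2) n"
    proof (intro exI allI impI)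
      fix n :: nat
      have "cmod (c b * ip (B b) v) \<le> (cmod (c b))^2 + (cmod (ip v (B b)))^2" for b
      proof -
        have e: "cmod (ip (B b) v) = cmod (ip v (B b))" by (simp add: ip_cnj[of "B b" v])
        have "2 * cmod (c b) * cmod (ip v (B b)) \<le> (cmod (c b))^2 + (cmod (ip v (B b)))^2"
          by (rule sum_squares_bound)
        moreover have "0 \<le> cmod (c b) * cmod (ip v (B b))" by simp
        ultimately have "cmod (c b) * cmod (ip v (B b)) \<le> (cmod (c b))^2 + (cmod (ip v (B b)))^2"
          by linarith
        then show ?thesis by (simp add: norm_mult e)
      qed
      then show "norm (norm (tt (\<lambda>b. c b * ip (B b) v) n)) \<le> a n + tt (\<lambda>b. (cmod (ip v (B b)))^2) n"
        by (simp add: tt_def a_def)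
    qed
  qed
  have "((\<lambda>b. c b * ip (B b) v) has_sum ip f v) UNIV"
    by (rule tt_has_sum[OF sm lim])
  then show ?thesis by (simp add: c_def)
qed


lemma transl_pow: "(transl ^^ n) u x = u (x - real n)"
  by (induction n arbitrary: x) (auto simp: transl_def algebra_simps)

lemma transl_inv_pow: "(transl_inv ^^ n) u x = u (x + real n)"
  by (induction n arbitrary: x) (auto simp: transl_inv_def algebra_simps)

lemma Tq_closed: "Tq q u x = u (x - real_of_int q)"
  by (auto simp: Tq_def int_pow_def transl_pow transl_inv_pow)

lemma sqrt2_powr: "sqrt 2 = 2 powr (1/2)"
  by (simp add: powr_half_sqrt)

lemma dil_pow: "(dil ^^ n) u x = complex_of_real (2 powr (real n / 2)) * u (2 powr (real n) * x)"
proof (induction n arbitrary: x)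
  case 0 then show ?case by simp
next
  case (Suc n)
  have "(dil ^^ Suc n) u x = complex_of_real (sqrt 2) * (dil ^^ n) u (2 * x)"
    by (simp add: dil_def)
  also have "\<dots> = complex_of_real (sqrt 2 * 2 powr (real n / 2)) * u (2 powr (real n) * (2 * x))"
    by (simp add: Suc)
  also have "sqrt 2 * 2 powr (real n / 2) = 2 powr (real (Suc n) / 2)"
    by (simp add: sqrt2_powr powr_add[symmetric] add_divide_distrib)
  also have "2 powr (real n) * (2 * x) = 2 powr (real (Suc n)) * x"
    by (simp add: powr_add)
  finally show ?case .
qed

lemma dil_inv_pow: "(dil_inv ^^ n) u x = complex_of_real (2 powr (- real n / 2)) * u (2 powr (- real n) * x)"
proof (induction n arbitrary: x)
  case 0 then show ?case by simp
next
  case (Suc n)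
  have "(dil_inv ^^ Suc n) u x = (dil_inv ^^ n) u (x / 2) / complex_of_real (sqrt 2)"
    by (simp add: dil_inv_def)
  also have "\<dots> = complex_of_real (2 powr (- real n / 2) / sqrt 2) * u (2 powr (- real n) * (x / 2))"
    by (simp add: Suc)
  also have "2 powr (- real n / 2) / sqrt 2 = 2 powr (- real (Suc n) / 2)"
  proof -
    have e: "- real (Suc n) / 2 = - real n / 2 - 1/2" by simp
    show ?thesis unfolding e powr_diff[of 2 "- real n / 2" "1/2"] sqrt2_powr by (rule refl)
  qed
  also have "2 powr (- real n) * (x / 2) = 2 powr (- real (Suc n)) * x"
    by (simp add: powr_diff powr_minus divide_simps)
  finally show ?case .
qed

lemma Dp_closed: "Dp p u x = complex_of_real (2 powr (real_of_int p / 2)) * u (2 powr (real_of_int p) * x)"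
  by (auto simp: Dp_def int_pow_def dil_pow dil_inv_pow)

lemma Tq_Lb: "Tq q (Lb L0 n i) = Lb L0 (n + q) i"
  by (auto simp: fun_eq_iff Tq_closed Lb_def algebra_simps)

lemma Dp_Kb: "Dp p (Kb K0 m s j) = Kb K0 (m + p) s j"
proof (rule ext)
  fix x
  have "Dp p (Kb K0 m s j) x = complex_of_real (2 powr (real_of_int p / 2) * 2 powr (real_of_int m / 2))
        * K0 s j (2 powr real_of_int m * (2 powr real_of_int p * x))"
    by (simp add: Dp_closed Kb_def)
  also have "2 powr (real_of_int p / 2) * 2 powr (real_of_int m / 2) = 2 powr (real_of_int (m + p) / 2)"
    by (simp add: powr_add[symmetric] add_divide_distrib add.commute)
  also have "2 powr real_of_int m * (2 powr real_of_int p * x) = 2 powr (real_of_int (m + p)) * x"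
    by (simp add: powr_add)
  finally have calc: "Dp p (Kb K0 m s j) x = complex_of_real (2 powr (real_of_int (m + p) / 2)) * K0 s j (2 powr (real_of_int (m + p)) * x)" .
  show "Dp p (Kb K0 m s j) x = Kb K0 (m + p) s j x" unfolding Kb_def[of K0 "m + p" s j x] by (rule calc)
qed

lemma Tq_inv: "Tq q (Tq (-q) w) = w" "Tq (-q) (Tq q w) = w"
  by (auto simp: fun_eq_iff Tq_closed)

lemma Dp_inv: "Dp p (Dp (-p) w) = w" "Dp (-p) (Dp p w) = w"
proof -
  have a: "Dp p (Dp (-p) w) = w" for p
  proof (rule ext)
    fix x
    have "Dp p (Dp (-p) w) x = complex_of_real (2 powr (real_of_int p / 2) * 2 powr (- real_of_int p / 2))
        * w (2 powr (- real_of_int p) * (2 powr real_of_int p * x))"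
      by (simp add: Dp_closed)
    also have "2 powr (real_of_int p / 2) * 2 powr (- real_of_int p / 2) = 1"
      by (simp add: powr_add[symmetric])
    also have "2 powr (- real_of_int p) * (2 powr real_of_int p * x) = x"
      by (simp add: powr_minus)
    finally show "Dp p (Dp (-p) w) x = w x" by simp
  qed
  show "Dp p (Dp (-p) w) = w" by (rule a)
  show "Dp (-p) (Dp p w) = w" using a[of "-p"] by simp
qed

lemma ip_shift: "ip (\<lambda>x. u (x - c)) (\<lambda>x. w (x - c)) = ip u w"
  unfolding ip_def
  using lborel_integral_real_affine[of 1 "\<lambda>x. u x * cnj (w x)" "- c"] by simp

lemma ip_scale:
  assumes a: "a > 0"
  shows "ip (\<lambda>x. complex_of_real b * u (a * x)) (\<lambda>x. complex_of_real b * w (a * x)) = complex_of_real (b^2 / a) * ip u w"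
proof -
  have "ip u w = complex_of_real a * (LINT x|lborel. u (a * x) * cnj (w (a * x)))"
    unfolding ip_def
    using lborel_integral_real_affine[of a "\<lambda>x. u x * cnj (w x)" 0] a by (simp add: scaleR_conv_of_real)
  moreover have "ip (\<lambda>x. complex_of_real b * u (a * x)) (\<lambda>x. complex_of_real b * w (a * x))
      = complex_of_real (b^2) * (LINT x|lborel. u (a * x) * cnj (w (a * x)))"
    unfolding ip_def by (simp add: power2_eq_square algebra_simps)
  ultimately show ?thesis using a by (simp add: field_simps)
qed

lemma ip_Tq: "ip (Tq q u) (Tq q w) = ip u w"
  unfolding Tq_closed by (rule ip_shift)

lemma ip_Dp: "ip (Dp p u) (Dp p w) = ip u w"
proof -
  have "ip (Dp p u) (Dp p w) = complex_of_real ((2 powr (real_of_int p / 2))^2 / 2 powr real_of_int p) * ip u w"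
    unfolding Dp_closed[abs_def] by (rule ip_scale) simp
  also have "(2 powr (real_of_int p / 2))^2 = 2 powr real_of_int p"
    by (simp add: power2_eq_square powr_add[symmetric])
  finally show ?thesis by simp
qed

lemma ip_Tq_adj: "ip (Tq q u) w = ip u (Tq (-q) w)"
  using ip_Tq[of q u "Tq (-q) w"] by (simp add: Tq_inv)

lemma ip_Dp_adj: "ip (Dp p u) w = ip u (Dp (-p) w)"
  using ip_Dp[of p u "Dp (-p) w"] by (simp add: Dp_inv)

lemma ip_Tq_adj2: "ip u (Tq q w) = ip (Tq (-q) u) w"
  using ip_Tq_adj[of "-q" u w] by simp

lemma ip_Dp_adj2: "ip u (Dp p w) = ip (Dp (-p) u) w"
  using ip_Dp_adj[of "-p" u w] by simp

lemma sq_int_shift: assumes "sq_int u" shows "sq_int (\<lambda>x. u (x - c))"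
proof -
  have [measurable]: "u \<in> borel_measurable borel" using assms by (simp add: sq_int_def)
  have "integrable lborel (\<lambda>x. (cmod (u (- c + 1 * x)))^2)"
    using lborel_integrable_real_affine[OF sq_intD(2)[OF assms], of 1 "-c"] by simp
  then show ?thesis unfolding sq_int_def by simp
qed

lemma sq_int_scale: assumes "sq_int u" "a \<noteq> 0" shows "sq_int (\<lambda>x. b * u (a * x))"
proof -
  have [measurable]: "u \<in> borel_measurable borel" using assms by (simp add: sq_int_def)
  have "integrable lborel (\<lambda>x. (cmod (u (0 + a * x)))^2)"
    using lborel_integrable_real_affine[OF sq_intD(2)[OF assms(1)], of a 0] assms(2) by simp
  then have "sq_int (\<lambda>x. u (a * x))" unfolding sq_int_def by simp
  then show ?thesis by (rule sq_int_cmult)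
qed

lemma sq_int_Tq: "sq_int u \<Longrightarrow> sq_int (Tq q u)"
  unfolding Tq_closed[abs_def] by (rule sq_int_shift)

lemma sq_int_Dp: "sq_int u \<Longrightarrow> sq_int (Dp p u)"
  unfolding Dp_closed[abs_def] by (rule sq_int_scale) auto


lemma onb_onD:
  assumes "onb_on S B"
  shows "sq_int (B i)" "x \<notin> S \<Longrightarrow> B i x = 0" "ip (B i) (B i') = (if i = i' then 1 else 0)"
    "sq_int f \<Longrightarrow> (\<And>x. x \<notin> S \<Longrightarrow> f x = 0) \<Longrightarrow> (\<And>i. ip f (B i) = 0) \<Longrightarrow> AE x in lborel. f x = 0"
  using assms unfolding onb_on_def by blast+

definition LB :: "('i \<Rightarrow> real \<Rightarrow> complex) \<Rightarrow> 'i \<times> int \<Rightarrow> real \<Rightarrow> complex" where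
  "LB L0 = (\<lambda>(i, n). Lb L0 n i)"

lemma ip_zero_fun: assumes H: "\<And>x. u x * cnj (w x) = 0" shows "ip u w = 0"
proof -
  have "(\<lambda>x. u x * cnj (w x)) = (\<lambda>x. 0)" by (rule ext) (rule H)
  then show ?thesis by (simp add: ip_def)
qed

lemma LB_onsys:
  assumes L: "onb_on {0..<1} L0"
  shows "onsys (LB L0)"
  unfolding onsys_def
proof (intro conjI allI)
  fix b :: "'a \<times> int"
  obtain i n where b: "b = (i, n)" by (cases b)
  show "sq_int (LB L0 b)" unfolding b LB_def Lb_def by (simp add: sq_int_shift onb_onD(1)[OF L])
next
  fix a b :: "'a \<times> int"
  obtain i n where a: "a = (i, n)" by (cases a)
  obtain i' n' where b: "b = (i', n')" by (cases b)
  show "ip (LB L0 a) (LB L0 b) = (if a = b then 1 else 0)"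
  proof (cases "n = n'")
    case True
    have "ip (LB L0 a) (LB L0 b) = ip (L0 i) (L0 i')"
      unfolding a b LB_def Lb_def True by (simp add: ip_shift)
    then show ?thesis using onb_onD(3)[OF L, of i i'] by (simp add: a b True)
  next
    case False
    have "ip (LB L0 a) (LB L0 b) = 0"
      unfolding a b LB_def Lb_def
    proof (simp, rule ip_zero_fun)
      fix x
      show "L0 i (x - real_of_int n) * cnj (L0 i' (x - real_of_int n')) = 0"
      proof (rule ccontr)
        assume "L0 i (x - real_of_int n) * cnj (L0 i' (x - real_of_int n')) \<noteq> 0"
        then have "L0 i (x - real_of_int n) \<noteq> 0" "L0 i' (x - real_of_int n') \<noteq> 0" by auto
        then have "x - real_of_int n \<in> {0..<1}" "x - real_of_int n' \<in> {0..<1}"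
          using onb_onD(2)[OF L] by blast+
        then have "floor x = n" "floor x = n'" by (auto intro!: floor_unique)
        with False show False by simp
      qed
    qed
    then show ?thesis using False by (simp add: a b)
  qed
qed

lemma LB_cmpl:
  assumes L: "onb_on {0..<1} L0"
  shows "cmpl (LB L0)"
  unfolding cmpl_def
proof (intro allI impI, elim conjE)
  fix h assume sh: "sq_int h" and orth: "\<forall>b. ip h (LB L0 b) = 0"
  have hm[measurable]: "h \<in> borel_measurable borel" using sh by (simp add: sq_int_def)
  define hn where "hn n x = h (x + real_of_int n) * indicator {0..<1} x" for n :: int and x
  have aen: "AE x in lborel. hn n x = 0" for n
  proof (rule onb_onD(4)[OF L])
    have s1: "sq_int (\<lambda>x. h (x - real_of_int (- n)))" by (rule sq_int_shift[OF sh])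
    show "sq_int (hn n)" unfolding sq_int_def
    proof
      show "hn n \<in> borel_measurable lborel" unfolding hn_def by measurable
      have "integrable lborel (\<lambda>x. (cmod (h (x - real_of_int (- n))))^2 * indicator {0..<1} x)"
        by (rule integrable_real_mult_indicator) (use s1 in \<open>auto simp: sq_int_def\<close>)
      moreover have "(\<lambda>x. (cmod (h (x - real_of_int (- n))))^2 * indicator {0..<1} x) = (\<lambda>x. (cmod (hn n x))^2)"
        by (auto simp: fun_eq_iff hn_def indicator_def)
      ultimately show "integrable lborel (\<lambda>x. (cmod (hn n x))^2)" by simp
    qed
    show "\<And>x. x \<notin> {0..<1} \<Longrightarrow> hn n x = 0" by (simp add: hn_def)
    fix i
    have "ip (hn n) (L0 i) = ip (\<lambda>x. h (x + real_of_int n)) (L0 i)"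
      unfolding ip_def
    proof (rule Bochner_Integration.integral_cong[OF refl])
      fix x
      show "hn n x * cnj (L0 i x) = h (x + real_of_int n) * cnj (L0 i x)"
        using onb_onD(2)[OF L, of x i] by (cases "x \<in> {0..<1}") (auto simp: hn_def)
    qed
    also have "\<dots> = ip h (\<lambda>x. L0 i (x - real_of_int n))"
      using ip_shift[of "\<lambda>x. h (x + real_of_int n)" "real_of_int n" "L0 i"] by simp
    also have "\<dots> = ip h (LB L0 (i, n))" by (simp add: LB_def Lb_def[abs_def])
    also have "\<dots> = 0" using orth by blast
    finally show "ip (hn n) (L0 i) = 0" .
  qed
  have ae1: "AE x in lborel. \<forall>n. hn n x = 0"
    using aen by (simp add: AE_all_countable)
  have pm: "Measurable.pred borel (\<lambda>x. \<forall>n. hn n x = 0)"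
    unfolding hn_def by measurable
  have ae2: "AE y in lborel. \<forall>n. hn n (- real_of_int k + 1 * y) = 0" for k
    by (rule AE_borel_affine[OF _ pm ae1]) simp
  have ae3: "AE y in lborel. \<forall>k. \<forall>n. hn n (- real_of_int k + 1 * y) = 0"
    using ae2 by (simp add: AE_all_countable)
  show "AE x in lborel. h x = 0"
    using ae3
  proof (rule AE_mp, intro AE_I2 impI)
    fix y assume "\<forall>k n. hn n (- real_of_int k + 1 * y) = 0"
    then have "hn (floor y) (- real_of_int (floor y) + 1 * y) = 0" by blast
    moreover have "- real_of_int (floor y) + 1 * y \<in> {0..<1}"
      by (simp add: floor_le_iff) linarith
    ultimately show "h y = 0" by (simp add: hn_def)
  qed
qed


definition SS :: "bool \<Rightarrow> real set" where
  "SS s = (if s then {1..<2} else {-2<..-1})"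

definition KB :: "(bool \<Rightarrow> 'j \<Rightarrow> real \<Rightarrow> complex) \<Rightarrow> bool \<times> 'j \<times> int \<Rightarrow> real \<Rightarrow> complex" where
  "KB K0 = (\<lambda>(s, j, m). Kb K0 m s j)"

lemma SS_abs: "x \<in> SS s \<Longrightarrow> 1 \<le> \<bar>x\<bar> \<and> \<bar>x\<bar> < 2 \<and> (s \<longleftrightarrow> x > 0)"
  by (cases s) (auto simp: SS_def)

lemma SS_intro: "1 \<le> \<bar>x\<bar> \<Longrightarrow> \<bar>x\<bar> < 2 \<Longrightarrow> x \<in> SS (x > 0)"
  by (cases "x < 0") (auto simp: SS_def)

lemma dyadic_unique:
  assumes a: "a > 0" and "1 \<le> 2 powr (real_of_int m) * a" "2 powr (real_of_int m) * a < 2"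
  shows "m = - floor (log 2 a)"
proof -
  have e: "2 powr (real_of_int m) * a = 2 powr (real_of_int m + log 2 a)"
    using a by (simp add: powr_add)
  have "2 powr 0 \<le> 2 powr (real_of_int m + log 2 a)" using assms(2) e by simp
  then have "0 \<le> real_of_int m + log 2 a" by (subst (asm) powr_le_cancel_iff) auto
  moreover have "2 powr (real_of_int m + log 2 a) < 2 powr 1" using assms(3) e by simp
  then have "real_of_int m + log 2 a < 1" by (subst (asm) powr_less_cancel_iff) auto
  ultimately have "floor (log 2 a) = - m" by (intro floor_unique) auto
  then show ?thesis by simp
qed

lemma dyadic_exists:
  assumes a: "a > 0"
  shows "1 \<le> 2 powr (real_of_int (- floor (log 2 a))) * a \<and> 2 powr (real_of_int (- floor (log 2 a))) * a < 2"
proof -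
  define m where "m = - floor (log 2 a)"
  have e: "2 powr (real_of_int m) * a = 2 powr (real_of_int m + log 2 a)"
    using a by (simp add: powr_add)
  have f1: "0 \<le> real_of_int m + log 2 a" unfolding m_def by (simp; linarith?)
  have f2: "real_of_int m + log 2 a < 1" unfolding m_def by (simp; linarith?)
  have "2 powr 0 \<le> 2 powr (real_of_int m + log 2 a)" using f1 by (subst powr_le_cancel_iff) auto
  moreover have "2 powr (real_of_int m + log 2 a) < 2 powr 1" using f2 by (subst powr_less_cancel_iff) auto
  ultimately show ?thesis using e unfolding m_def[symmetric] by simp
qed

lemma Kb_nz:
  assumes K: "\<And>s. onb_on (SS s) (K0 s)" and nz: "Kb K0 m s j x \<noteq> 0"
  shows "2 powr (real_of_int m) * x \<in> SS s"
  using nz onb_onD(2)[OF K] by (auto simp: Kb_def)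

lemma KB_onsys:
  assumes K: "\<And>s. onb_on (SS s) (K0 s)"
  shows "onsys (KB K0)"
  unfolding onsys_def
proof (intro conjI allI)
  fix b :: "bool \<times> 'a \<times> int"
  obtain s j m where b: "b = (s, j, m)" by (cases b)
  show "sq_int (KB K0 b)" unfolding b KB_def Kb_def by (simp add: sq_int_scale onb_onD(1)[OF K])
next
  fix a b :: "bool \<times> 'a \<times> int"
  obtain s j m where a: "a = (s, j, m)" by (cases a)
  obtain s' j' m' where b: "b = (s', j', m')" by (cases b)
  show "ip (KB K0 a) (KB K0 b) = (if a = b then 1 else 0)"
  proof (cases "s = s' \<and> m = m'")
    case True
    have "ip (KB K0 a) (KB K0 b) = complex_of_real ((2 powr (real_of_int m / 2))^2 / 2 powr (real_of_int m)) * ip (K0 s j) (K0 s j')"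
      unfolding a b KB_def Kb_def[abs_def] using True by (simp add: ip_scale)
    also have "(2 powr (real_of_int m / 2))^2 = 2 powr (real_of_int m)"
      by (simp add: power2_eq_square powr_add[symmetric])
    finally have "ip (KB K0 a) (KB K0 b) = ip (K0 s j) (K0 s j')" by simp
    then show ?thesis using onb_onD(3)[OF K, of s j j'] True by (simp add: a b)
  next
    case False
    have "ip (KB K0 a) (KB K0 b) = 0"
      unfolding a b KB_def
    proof (simp, rule ip_zero_fun)
      fix x
      show "Kb K0 m s j x * cnj (Kb K0 m' s' j' x) = 0"
      proof (rule ccontr)
        assume "Kb K0 m s j x * cnj (Kb K0 m' s' j' x) \<noteq> 0"
        then have "Kb K0 m s j x \<noteq> 0" "Kb K0 m' s' j' x \<noteq> 0" by auto
        then have A: "2 powr (real_of_int m) * x \<in> SS s" and B: "2 powr (real_of_int m') * x \<in> SS s'"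
          using Kb_nz[OF K] by blast+
        from SS_abs[OF A] SS_abs[OF B] have "s = s'" by (auto simp: zero_less_mult_iff)
        have xz: "x \<noteq> 0" using SS_abs[OF A] by auto
        from SS_abs[OF A] have "1 \<le> 2 powr (real_of_int m) * \<bar>x\<bar>" "2 powr (real_of_int m) * \<bar>x\<bar> < 2"
          by (simp_all add: abs_mult)
        then have "m = - floor (log 2 \<bar>x\<bar>)" using xz by (intro dyadic_unique) auto
        moreover from SS_abs[OF B] have "1 \<le> 2 powr (real_of_int m') * \<bar>x\<bar>" "2 powr (real_of_int m') * \<bar>x\<bar> < 2"
          by (simp_all add: abs_mult)
        then have "m' = - floor (log 2 \<bar>x\<bar>)" using xz by (intro dyadic_unique) auto
        ultimately show False using False \<open>s = s'\<close> by simp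
      qed
    qed
    then show ?thesis using False by (auto simp: a b)
  qed
qed

lemma KB_cmpl:
  assumes K: "\<And>s. onb_on (SS s) (K0 s)"
  shows "cmpl (KB K0)"
  unfolding cmpl_def
proof (intro allI impI, elim conjE)
  fix h assume sh: "sq_int h" and orth: "\<forall>b. ip h (KB K0 b) = 0"
  have hm[measurable]: "h \<in> borel_measurable borel" using sh by (simp add: sq_int_def)
  have SSm[measurable]: "SS s \<in> sets borel" for s by (simp add: SS_def)
  define hn where "hn m s x = h (2 powr (- real_of_int m) * x) * indicator (SS s) x" for m :: int and s x
  have aen: "AE x in lborel. hn m s x = 0" for m s
  proof (rule onb_onD(4)[OF K])
    have s1: "sq_int (\<lambda>x. 1 * h (2 powr (- real_of_int m) * x))" by (rule sq_int_scale[OF sh]) simp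
    show "sq_int (hn m s)" unfolding sq_int_def
    proof
      show "hn m s \<in> borel_measurable lborel" unfolding hn_def by measurable
      have "integrable lborel (\<lambda>x. (cmod (1 * h (2 powr (- real_of_int m) * x)))^2 * indicator (SS s) x)"
        by (rule integrable_real_mult_indicator) (use s1 in \<open>auto simp: sq_int_def\<close>)
      moreover have "(\<lambda>x. (cmod (1 * h (2 powr (- real_of_int m) * x)))^2 * indicator (SS s) x) = (\<lambda>x. (cmod (hn m s x))^2)"
        by (auto simp: fun_eq_iff hn_def indicator_def)
      ultimately show "integrable lborel (\<lambda>x. (cmod (hn m s x))^2)" by simp
    qed
    show "\<And>x. x \<notin> SS s \<Longrightarrow> hn m s x = 0" by (simp add: hn_def)
    fix j
    have "ip (hn m s) (K0 s j) = ip (\<lambda>x. h (2 powr (- real_of_int m) * x)) (K0 s j)"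
      unfolding ip_def
    proof (rule Bochner_Integration.integral_cong[OF refl])
      fix x
      show "hn m s x * cnj (K0 s j x) = h (2 powr (- real_of_int m) * x) * cnj (K0 s j x)"
        using onb_onD(2)[OF K, of x s j] by (cases "x \<in> SS s") (auto simp: hn_def)
    qed
    moreover have "ip h (KB K0 (s, j, m)) = complex_of_real (2 powr (real_of_int m / 2) * 2 powr (- real_of_int m)) * ip (\<lambda>x. h (2 powr (- real_of_int m) * x)) (K0 s j)"
    proof -
      have "ip h (KB K0 (s, j, m)) = complex_of_real (2 powr (real_of_int m / 2)) * (LINT y|lborel. h y * cnj (K0 s j (2 powr (real_of_int m) * y)))"
      proof -
        have "(\<lambda>y. h y * cnj (KB K0 (s, j, m) y)) = (\<lambda>y. complex_of_real (2 powr (real_of_int m / 2)) * (h y * cnj (K0 s j (2 powr (real_of_int m) * y))))"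
          by (simp add: fun_eq_iff KB_def Kb_def mult_ac)
        then show ?thesis unfolding ip_def by simp
      qed
      also have "(LINT y|lborel. h y * cnj (K0 s j (2 powr (real_of_int m) * y)))
          = complex_of_real (2 powr (- real_of_int m)) * (LINT x|lborel. h (2 powr (- real_of_int m) * x) * cnj (K0 s j x))"
      proof -
        have "(LINT y|lborel. h y * cnj (K0 s j (2 powr (real_of_int m) * y)))
           = \<bar>2 powr (- real_of_int m)\<bar> *\<^sub>R (LINT x|lborel. h (0 + 2 powr (- real_of_int m) * x) * cnj (K0 s j (2 powr (real_of_int m) * (0 + 2 powr (- real_of_int m) * x))))"
          by (rule lborel_integral_real_affine) simp
        also have "\<dots> = complex_of_real (2 powr (- real_of_int m)) * (LINT x|lborel. h (2 powr (- real_of_int m) * x) * cnj (K0 s j x))"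
        proof -
          have ef: "\<And>x. 2 powr (real_of_int m) * (2 powr (- real_of_int m) * x) = x"
            by (simp add: powr_minus)
          have eq: "(\<lambda>x. h (0 + 2 powr (- real_of_int m) * x) * cnj (K0 s j (2 powr (real_of_int m) * (0 + 2 powr (- real_of_int m) * x))))
              = (\<lambda>x. h (2 powr (- real_of_int m) * x) * cnj (K0 s j x))"
            by (rule ext) (simp only: add_0_left ef)
          show ?thesis unfolding eq by (simp add: scaleR_conv_of_real)
        qed
        finally show ?thesis .
      qed
      finally show ?thesis unfolding ip_def by (simp add: mult_ac)
    qed
    ultimately have "ip h (KB K0 (s, j, m)) = complex_of_real (2 powr (real_of_int m / 2) * 2 powr (- real_of_int m)) * ip (hn m s) (K0 s j)"
      by simp
    moreover have "ip h (KB K0 (s, j, m)) = 0" using orth by blast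
    moreover have "complex_of_real (2 powr (real_of_int m / 2) * 2 powr (- real_of_int m)) \<noteq> 0" by simp
    ultimately show "ip (hn m s) (K0 s j) = 0" by simp
  qed
  have ae1: "AE x in lborel. \<forall>m s. hn m s x = 0"
    using aen by (simp add: AE_all_countable)
  have pm: "Measurable.pred borel (\<lambda>x. \<forall>m s. hn m s x = 0)"
    unfolding hn_def by measurable
  have ae2: "AE y in lborel. \<forall>m s. hn m s (0 + 2 powr (real_of_int k) * y) = 0" for k :: int
    by (rule AE_borel_affine[OF _ pm ae1]) simp
  have ae3: "AE y in lborel. \<forall>k::int. \<forall>m s. hn m s (0 + 2 powr (real_of_int k) * y) = 0"
    using ae2 by (simp add: AE_all_countable)
  show "AE x in lborel. h x = 0"
    using ae3 AE_lborel_singleton[of "0::real"]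
  proof (elim AE_mp, intro AE_I2 impI)
    fix y :: real assume y0: "y \<noteq> 0" and H: "\<forall>k::int. \<forall>m s. hn m s (0 + 2 powr (real_of_int k) * y) = 0"
    define k where "k = - floor (log 2 \<bar>y\<bar>)"
    have "1 \<le> 2 powr (real_of_int k) * \<bar>y\<bar> \<and> 2 powr (real_of_int k) * \<bar>y\<bar> < 2"
      unfolding k_def by (rule dyadic_exists) (use y0 in simp)
    then have "1 \<le> \<bar>2 powr (real_of_int k) * y\<bar>" "\<bar>2 powr (real_of_int k) * y\<bar> < 2"
      by (simp_all add: abs_mult)
    then have mem: "2 powr (real_of_int k) * y \<in> SS (2 powr (real_of_int k) * y > 0)" by (rule SS_intro)
    have "hn k (2 powr (real_of_int k) * y > 0) (2 powr (real_of_int k) * y) = 0" using H by simp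
    moreover have "2 powr (- real_of_int k) * (2 powr (real_of_int k) * y) = y" by (simp add: powr_minus)
    ultimately show "h y = 0" using mem by (simp add: hn_def)
  qed
qed


theorem lemma3:
  fixes L0 :: "'i::countable \<Rightarrow> real \<Rightarrow> complex"
    and K0 :: "bool \<Rightarrow> 'j::countable \<Rightarrow> real \<Rightarrow> complex"
    and f :: "real \<Rightarrow> complex"
    and p q :: int
  assumes L0_onb: "onb_on {0..<1} L0"
    and Kp_onb: "onb_on {1..<2} (K0 True)"
    and Km_onb: "onb_on {-2<..-1} (K0 False)"
    and f_L2: "sq_int f"
  shows
   "(\<forall>l k. (\<forall>s j m. (\<lambda>(i, n). alpha L0 K0 s j (m - p) i (n + q) * fhat L0 f n i) summable_on UNIV)
       \<and> ((\<lambda>(s, j, m). cnj (alpha L0 K0 s j m l k) *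
             infsum (\<lambda>(i, n). alpha L0 K0 s j (m - p) i (n + q) * fhat L0 f n i) UNIV)
           has_sum fhat L0 (Dp p (Tq q f)) k l) UNIV)
  \<and> (\<forall>l k. (\<forall>s j m. (\<lambda>(i, n). alpha L0 K0 s j (m - p) i n * fhat L0 f n i) summable_on UNIV)
       \<and> ((\<lambda>(s, j, m). cnj (alpha L0 K0 s j m l (k - q)) *
             infsum (\<lambda>(i, n). alpha L0 K0 s j (m - p) i n * fhat L0 f n i) UNIV)
           has_sum fhat L0 (Tq q (Dp p f)) k l) UNIV)
  \<and> (\<forall>\<sigma> l k. (\<forall>i n. (\<lambda>(s, j, m). cnj (alpha L0 K0 s j m i (n - q)) * ftil K0 f m s j) summable_on UNIV)
       \<and> ((\<lambda>(i, n). alpha L0 K0 \<sigma> l (k - p) i n *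
             infsum (\<lambda>(s, j, m). cnj (alpha L0 K0 s j m i (n - q)) * ftil K0 f m s j) UNIV)
           has_sum ftil K0 (Dp p (Tq q f)) k \<sigma> l) UNIV)
  \<and> (\<forall>\<sigma> l k. (\<forall>i n. (\<lambda>(s, j, m). cnj (alpha L0 K0 s j (m + p) i (n - q)) * ftil K0 f m s j) summable_on UNIV)
       \<and> ((\<lambda>(i, n). alpha L0 K0 \<sigma> l k i n *
             infsum (\<lambda>(s, j, m). cnj (alpha L0 K0 s j (m + p) i (n - q)) * ftil K0 f m s j) UNIV)
           has_sum ftil K0 (Tq q (Dp p f)) k \<sigma> l) UNIV)"
proof -
  have K: "\<And>s. onb_on (SS s) (K0 s)"
    using Kp_onb Km_onb by (case_tac s) (auto simp: SS_def)
  have onsL: "onsys (LB L0)" by (rule LB_onsys[OF L0_onb])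
  have cmL: "cmpl (LB L0)" by (rule LB_cmpl[OF L0_onb])
  have onsK: "onsys (KB K0)" by (rule KB_onsys[OF K])
  have cmK: "cmpl (KB K0)" by (rule KB_cmpl[OF K])
  have sLb: "sq_int (Lb L0 n i)" for n i
    using onsysD(1)[OF onsL, of "(i, n)"] by (simp add: LB_def)
  have sKb: "sq_int (Kb K0 m s j)" for m s j
    using onsysD(1)[OF onsK, of "(s, j, m)"] by (simp add: KB_def)
  have PL: "((\<lambda>(i, n). ip u (Lb L0 n i) * ip (Lb L0 n i) v) has_sum ip u v) UNIV"
    if "sq_int u" "sq_int v" for u v
  proof -
    have "((\<lambda>b. ip u (LB L0 b) * ip (LB L0 b) v) has_sum ip u v) UNIV"
      by (rule parseval[OF onsL cmL that])
    moreover have "(\<lambda>b. ip u (LB L0 b) * ip (LB L0 b) v) = (\<lambda>(i, n). ip u (Lb L0 n i) * ip (Lb L0 n i) v)"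
      by (auto simp: fun_eq_iff LB_def)
    ultimately show ?thesis by simp
  qed
  have PK: "((\<lambda>(s, j, m). ip u (Kb K0 m s j) * ip (Kb K0 m s j) v) has_sum ip u v) UNIV"
    if "sq_int u" "sq_int v" for u v
  proof -
    have "((\<lambda>b. ip u (KB K0 b) * ip (KB K0 b) v) has_sum ip u v) UNIV"
      by (rule parseval[OF onsK cmK that])
    moreover have "(\<lambda>b. ip u (KB K0 b) * ip (KB K0 b) v) = (\<lambda>(s, j, m). ip u (Kb K0 m s j) * ip (Kb K0 m s j) v)"
      by (auto simp: fun_eq_iff KB_def)
    ultimately show ?thesis by simp
  qed
  have KL: "ip (Kb K0 m s j) (Lb L0 n i) = cnj (alpha L0 K0 s j m i n)" for m s j n i
    by (simp add: alpha_def ip_cnj[of "Kb K0 m s j"])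
  have sTf: "sq_int (Tq q f)" by (rule sq_int_Tq[OF f_L2])
  have sDf: "sq_int (Dp p f)" by (rule sq_int_Dp[OF f_L2])
  have sg: "sq_int (Dp p (Tq q f))" by (rule sq_int_Dp[OF sTf])
  have sh: "sq_int (Tq q (Dp p f))" by (rule sq_int_Tq[OF sDf])

  have in1: "((\<lambda>(i, n). alpha L0 K0 s j (m - p) i (n + q) * fhat L0 f n i) has_sum ip (Dp p (Tq q f)) (Kb K0 m s j)) UNIV"
    for s j m
  proof -
    have P: "((\<lambda>(i, n). ip f (Lb L0 n i) * ip (Lb L0 n i) (Tq (-q) (Kb K0 (m - p) s j))) has_sum ip f (Tq (-q) (Kb K0 (m - p) s j))) UNIV"
      by (rule PL[OF f_L2 sq_int_Tq[OF sKb]])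
    have e1: "(\<lambda>(i, n). ip f (Lb L0 n i) * ip (Lb L0 n i) (Tq (-q) (Kb K0 (m - p) s j)))
        = (\<lambda>(i, n). alpha L0 K0 s j (m - p) i (n + q) * fhat L0 f n i)"
      by (auto simp: fun_eq_iff ip_Tq_adj2 Tq_Lb alpha_def fhat_def)
    have e2: "ip f (Tq (-q) (Kb K0 (m - p) s j)) = ip (Dp p (Tq q f)) (Kb K0 m s j)"
    proof -
      have "ip f (Tq (-q) (Kb K0 (m - p) s j)) = ip (Tq q f) (Kb K0 (m - p) s j)" by (simp add: ip_Tq_adj2)
      also have "\<dots> = ip (Dp p (Tq q f)) (Dp p (Kb K0 (m - p) s j))" by (rule ip_Dp[symmetric])
      also have "\<dots> = ip (Dp p (Tq q f)) (Kb K0 m s j)" by (simp add: Dp_Kb)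
      finally show ?thesis .
    qed
    show ?thesis using P unfolding e1 e2 .
  qed
  have part1: "(\<forall>s j m. (\<lambda>(i, n). alpha L0 K0 s j (m - p) i (n + q) * fhat L0 f n i) summable_on UNIV)
       \<and> ((\<lambda>(s, j, m). cnj (alpha L0 K0 s j m l k) *
             infsum (\<lambda>(i, n). alpha L0 K0 s j (m - p) i (n + q) * fhat L0 f n i) UNIV)
           has_sum fhat L0 (Dp p (Tq q f)) k l) UNIV" for l k
  proof
    show "\<forall>s j m. (\<lambda>(i, n). alpha L0 K0 s j (m - p) i (n + q) * fhat L0 f n i) summable_on UNIV"
      using in1 by (auto simp: summable_on_def)
    have P: "((\<lambda>(s, j, m). ip (Dp p (Tq q f)) (Kb K0 m s j) * ip (Kb K0 m s j) (Lb L0 k l)) has_sum ip (Dp p (Tq q f)) (Lb L0 k l)) UNIV"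
      by (rule PK[OF sg sLb])
    have e1: "(\<lambda>(s, j, m). ip (Dp p (Tq q f)) (Kb K0 m s j) * ip (Kb K0 m s j) (Lb L0 k l))
       = (\<lambda>(s, j, m). cnj (alpha L0 K0 s j m l k) *
             infsum (\<lambda>(i, n). alpha L0 K0 s j (m - p) i (n + q) * fhat L0 f n i) UNIV)"
      by (auto simp: fun_eq_iff KL infsumI[OF in1])
    show "((\<lambda>(s, j, m). cnj (alpha L0 K0 s j m l k) *
             infsum (\<lambda>(i, n). alpha L0 K0 s j (m - p) i (n + q) * fhat L0 f n i) UNIV)
           has_sum fhat L0 (Dp p (Tq q f)) k l) UNIV"
      using P unfolding e1 by (simp add: fhat_def)
  qed

  have in2: "((\<lambda>(i, n). alpha L0 K0 s j (m - p) i n * fhat L0 f n i) has_sum ip (Dp p f) (Kb K0 m s j)) UNIV"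
    for s j m
  proof -
    have P: "((\<lambda>(i, n). ip f (Lb L0 n i) * ip (Lb L0 n i) (Kb K0 (m - p) s j)) has_sum ip f (Kb K0 (m - p) s j)) UNIV"
      by (rule PL[OF f_L2 sKb])
    have e1: "(\<lambda>(i, n). ip f (Lb L0 n i) * ip (Lb L0 n i) (Kb K0 (m - p) s j))
        = (\<lambda>(i, n). alpha L0 K0 s j (m - p) i n * fhat L0 f n i)"
      by (auto simp: fun_eq_iff alpha_def fhat_def)
    have e2: "ip f (Kb K0 (m - p) s j) = ip (Dp p f) (Kb K0 m s j)"
    proof -
      have "ip f (Kb K0 (m - p) s j) = ip (Dp p f) (Dp p (Kb K0 (m - p) s j))" by (rule ip_Dp[symmetric])
      also have "\<dots> = ip (Dp p f) (Kb K0 m s j)" by (simp add: Dp_Kb)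
      finally show ?thesis .
    qed
    show ?thesis using P unfolding e1 e2 .
  qed
  have part2: "(\<forall>s j m. (\<lambda>(i, n). alpha L0 K0 s j (m - p) i n * fhat L0 f n i) summable_on UNIV)
       \<and> ((\<lambda>(s, j, m). cnj (alpha L0 K0 s j m l (k - q)) *
             infsum (\<lambda>(i, n). alpha L0 K0 s j (m - p) i n * fhat L0 f n i) UNIV)
           has_sum fhat L0 (Tq q (Dp p f)) k l) UNIV" for l k
  proof
    show "\<forall>s j m. (\<lambda>(i, n). alpha L0 K0 s j (m - p) i n * fhat L0 f n i) summable_on UNIV"
      using in2 by (auto simp: summable_on_def)
    have P: "((\<lambda>(s, j, m). ip (Dp p f) (Kb K0 m s j) * ip (Kb K0 m s j) (Lb L0 (k - q) l)) has_sum ip (Dp p f) (Lb L0 (k - q) l)) UNIV"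
      by (rule PK[OF sDf sLb])
    have e1: "(\<lambda>(s, j, m). ip (Dp p f) (Kb K0 m s j) * ip (Kb K0 m s j) (Lb L0 (k - q) l))
       = (\<lambda>(s, j, m). cnj (alpha L0 K0 s j m l (k - q)) *
             infsum (\<lambda>(i, n). alpha L0 K0 s j (m - p) i n * fhat L0 f n i) UNIV)"
      by (auto simp: fun_eq_iff KL infsumI[OF in2])
    have e2: "ip (Dp p f) (Lb L0 (k - q) l) = fhat L0 (Tq q (Dp p f)) k l"
    proof -
      have "ip (Dp p f) (Lb L0 (k - q) l) = ip (Tq q (Dp p f)) (Tq q (Lb L0 (k - q) l))" by (rule ip_Tq[symmetric])
      also have "\<dots> = fhat L0 (Tq q (Dp p f)) k l" by (simp add: Tq_Lb fhat_def)
      finally show ?thesis .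
    qed
    show "((\<lambda>(s, j, m). cnj (alpha L0 K0 s j m l (k - q)) *
             infsum (\<lambda>(i, n). alpha L0 K0 s j (m - p) i n * fhat L0 f n i) UNIV)
           has_sum fhat L0 (Tq q (Dp p f)) k l) UNIV"
      using P unfolding e1 e2 .
  qed

  have in3: "((\<lambda>(s, j, m). cnj (alpha L0 K0 s j m i (n - q)) * ftil K0 f m s j) has_sum ip (Tq q f) (Lb L0 n i)) UNIV"
    for i n
  proof -
    have P: "((\<lambda>(s, j, m). ip f (Kb K0 m s j) * ip (Kb K0 m s j) (Lb L0 (n - q) i)) has_sum ip f (Lb L0 (n - q) i)) UNIV"
      by (rule PK[OF f_L2 sLb])
    have e1: "(\<lambda>(s, j, m). ip f (Kb K0 m s j) * ip (Kb K0 m s j) (Lb L0 (n - q) i))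
        = (\<lambda>(s, j, m). cnj (alpha L0 K0 s j m i (n - q)) * ftil K0 f m s j)"
      by (auto simp: fun_eq_iff KL ftil_def)
    have e2: "ip f (Lb L0 (n - q) i) = ip (Tq q f) (Lb L0 n i)"
    proof -
      have "ip f (Lb L0 (n - q) i) = ip (Tq q f) (Tq q (Lb L0 (n - q) i))" by (rule ip_Tq[symmetric])
      also have "\<dots> = ip (Tq q f) (Lb L0 n i)" by (simp add: Tq_Lb)
      finally show ?thesis .
    qed
    show ?thesis using P unfolding e1 e2 .
  qed
  have part3: "(\<forall>i n. (\<lambda>(s, j, m). cnj (alpha L0 K0 s j m i (n - q)) * ftil K0 f m s j) summable_on UNIV)
       \<and> ((\<lambda>(i, n). alpha L0 K0 \<sigma> l (k - p) i n *
             infsum (\<lambda>(s, j, m). cnj (alpha L0 K0 s j m i (n - q)) * ftil K0 f m s j) UNIV)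
           has_sum ftil K0 (Dp p (Tq q f)) k \<sigma> l) UNIV" for \<sigma> l k
  proof
    show "\<forall>i n. (\<lambda>(s, j, m). cnj (alpha L0 K0 s j m i (n - q)) * ftil K0 f m s j) summable_on UNIV"
      using in3 by (auto simp: summable_on_def)
    have P: "((\<lambda>(i, n). ip (Tq q f) (Lb L0 n i) * ip (Lb L0 n i) (Kb K0 (k - p) \<sigma> l)) has_sum ip (Tq q f) (Kb K0 (k - p) \<sigma> l)) UNIV"
      by (rule PL[OF sTf sKb])
    have e1: "(\<lambda>(i, n). ip (Tq q f) (Lb L0 n i) * ip (Lb L0 n i) (Kb K0 (k - p) \<sigma> l))
       = (\<lambda>(i, n). alpha L0 K0 \<sigma> l (k - p) i n *
             infsum (\<lambda>(s, j, m). cnj (alpha L0 K0 s j m i (n - q)) * ftil K0 f m s j) UNIV)"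
      by (auto simp: fun_eq_iff alpha_def[of L0 K0 \<sigma> l "k - p"] infsumI[OF in3])
    have e2: "ip (Tq q f) (Kb K0 (k - p) \<sigma> l) = ftil K0 (Dp p (Tq q f)) k \<sigma> l"
    proof -
      have "ip (Tq q f) (Kb K0 (k - p) \<sigma> l) = ip (Dp p (Tq q f)) (Dp p (Kb K0 (k - p) \<sigma> l))" by (rule ip_Dp[symmetric])
      also have "\<dots> = ftil K0 (Dp p (Tq q f)) k \<sigma> l" by (simp add: Dp_Kb ftil_def)
      finally show ?thesis .
    qed
    show "((\<lambda>(i, n). alpha L0 K0 \<sigma> l (k - p) i n *
             infsum (\<lambda>(s, j, m). cnj (alpha L0 K0 s j m i (n - q)) * ftil K0 f m s j) UNIV)
           has_sum ftil K0 (Dp p (Tq q f)) k \<sigma> l) UNIV"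
      using P unfolding e1 e2 .
  qed

  have in4: "((\<lambda>(s, j, m). cnj (alpha L0 K0 s j (m + p) i (n - q)) * ftil K0 f m s j) has_sum ip (Tq q (Dp p f)) (Lb L0 n i)) UNIV"
    for i n
  proof -
    have P: "((\<lambda>(s, j, m). ip f (Kb K0 m s j) * ip (Kb K0 m s j) (Dp (-p) (Lb L0 (n - q) i))) has_sum ip f (Dp (-p) (Lb L0 (n - q) i))) UNIV"
      by (rule PK[OF f_L2 sq_int_Dp[OF sLb]])
    have e1: "(\<lambda>(s, j, m). ip f (Kb K0 m s j) * ip (Kb K0 m s j) (Dp (-p) (Lb L0 (n - q) i)))
        = (\<lambda>(s, j, m). cnj (alpha L0 K0 s j (m + p) i (n - q)) * ftil K0 f m s j)"
      by (auto simp: fun_eq_iff ip_Dp_adj2 Dp_Kb KL ftil_def)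
    have e2: "ip f (Dp (-p) (Lb L0 (n - q) i)) = ip (Tq q (Dp p f)) (Lb L0 n i)"
    proof -
      have "ip f (Dp (-p) (Lb L0 (n - q) i)) = ip (Dp p f) (Lb L0 (n - q) i)" by (simp add: ip_Dp_adj2)
      also have "\<dots> = ip (Tq q (Dp p f)) (Tq q (Lb L0 (n - q) i))" by (rule ip_Tq[symmetric])
      also have "\<dots> = ip (Tq q (Dp p f)) (Lb L0 n i)" by (simp add: Tq_Lb)
      finally show ?thesis .
    qed
    show ?thesis using P unfolding e1 e2 .
  qed
  have part4: "(\<forall>i n. (\<lambda>(s, j, m). cnj (alpha L0 K0 s j (m + p) i (n - q)) * ftil K0 f m s j) summable_on UNIV)
       \<and> ((\<lambda>(i, n). alpha L0 K0 \<sigma> l k i n *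
             infsum (\<lambda>(s, j, m). cnj (alpha L0 K0 s j (m + p) i (n - q)) * ftil K0 f m s j) UNIV)
           has_sum ftil K0 (Tq q (Dp p f)) k \<sigma> l) UNIV" for \<sigma> l k
  proof
    show "\<forall>i n. (\<lambda>(s, j, m). cnj (alpha L0 K0 s j (m + p) i (n - q)) * ftil K0 f m s j) summable_on UNIV"
      using in4 by (auto simp: summable_on_def)
    have P: "((\<lambda>(i, n). ip (Tq q (Dp p f)) (Lb L0 n i) * ip (Lb L0 n i) (Kb K0 k \<sigma> l)) has_sum ip (Tq q (Dp p f)) (Kb K0 k \<sigma> l)) UNIV"
      by (rule PL[OF sh sKb])
    have e1: "(\<lambda>(i, n). ip (Tq q (Dp p f)) (Lb L0 n i) * ip (Lb L0 n i) (Kb K0 k \<sigma> l))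
       = (\<lambda>(i, n). alpha L0 K0 \<sigma> l k i n *
             infsum (\<lambda>(s, j, m). cnj (alpha L0 K0 s j (m + p) i (n - q)) * ftil K0 f m s j) UNIV)"
      by (auto simp: fun_eq_iff alpha_def[of L0 K0 \<sigma> l k] infsumI[OF in4])
    show "((\<lambda>(i, n). alpha L0 K0 \<sigma> l k i n *
             infsum (\<lambda>(s, j, m). cnj (alpha L0 K0 s j (m + p) i (n - q)) * ftil K0 f m s j) UNIV)
           has_sum ftil K0 (Tq q (Dp p f)) k \<sigma> l) UNIV"
      using P unfolding e1 by (simp add: ftil_def)
  qed
  show ?thesis using part1 part2 part3 part4 by blast
qed


end
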